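(* Let $\sigma$, $\nu$, $\alpha$ and $c$ be as in the second-order ergodic theorem for admissible substitutions (see context). Then for every $b\in\mathcal B$ and $\nu$-a.e. $x=(x_k)_{k\in\mathbb Z}\in X_\sigma$, $$\lim_{n\to\infty}\frac1{\log n}\sum_{1\le k\le n,\ x_k=b}\frac1{k^\alpha}=\alpha\cdot c\cdot\nu([b]).$$
   Context: $\mathcal A=\{1,\dots,N\}$, $\sigma:\mathcal A\to\mathcal A^+$ a substitution; $X_\sigma=\{x\in\mathcal A^{\mathbb Z}:x[-n,n]$ is a subword of some $\sigma^m(a)$, $m\ge1$, for all $n\ge 1\}$ with left shift $S$; $[b]=\{x:x_0=b\}$. $M_\sigma$ has $(a,b)$ entry the number of occurrences of $a$ in $\sigma(b)$. $\sigma$ is admissible if $M_\sigma=\begin{pmatrix}A&C\\0&B\end{pmatrix}$ (suitable ordering) with $A,B$ primitive, $C\ne0$, $\rho(A)>\rho(B)>1$, and, with $\mathcal B$ the letters indexing $B$: each $\sigma(b)$, $b\in\mathcal B$, begins and ends with a letter of $\mathcal B$, and for each $b\in\mathcal B$ some $\sigma^k(b)$ has a letter of $\mathcal B$ at a position other than first and last. $\nu$ is the unique (up to scaling) $\sigma$-finite infinite $S$-invariant measure on $X_\sigma$ with $0<\nu([b])<\infty$ for $b\in\mathcal B$, normalized by $\sum_{b\in\mathcal B}\xi_b\nu([b])=1$, where $\xi_i>0$ satisfy $|\sigma^k(i)|/(\xi_i\rho(A)^k)\to1$. $\alpha=\log\rho(B)/\log\rho(A)$, and $c>0$ is the constant of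 the second-order ergodic theorem: for every $f\in L^1(X_\sigma,\nu)$ and $\nu$-a.e. $x$, $\lim_{n\to\infty}\frac1{\log n}\sum_{k=1}^n\frac{\sum_{i=0}^{k-1}f(S^ix)}{c\,k^{\alpha+1}}=\int f\,d\nu$ (explicitly, $c=\gamma\delta$ with $\delta$ the a.e. value of the right average $\alpha$-dimensional density of $\mathcal H^\alpha$ on the graph-directed sets $K_b$ of the associated tile substitution and $\gamma^{-1}=\sum_{b\in\mathcal B}\nu([b])\mathcal H^\alpha(K_b)$). *)

theory Defs
  imports "HOL-Analysis.Analysis" "HOL-Probability.Probability" "HOL-Library.Sublist"
    "Jordan_Normal_Form.Spectral_Radius" "Jordan_Normal_Form.DL_Submatrix"
begin

definition subst_word :: "(nat \<Rightarrow> nat list) \<Rightarrow> nat list \<Rightarrow> nat list" where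
  "subst_word \<sigma> w = concat (map \<sigma> w)"

definition subst_iter :: "(nat \<Rightarrow> nat list) \<Rightarrow> nat \<Rightarrow> nat \<Rightarrow> nat list" where
  "subst_iter \<sigma> m a = (subst_word \<sigma> ^^ m) [a]"

definition is_substitution :: "nat \<Rightarrow> (nat \<Rightarrow> nat list) \<Rightarrow> bool" where
  "is_substitution N \<sigma> \<longleftrightarrow> (\<forall>a\<in>{1..N}. \<sigma> a \<noteq> [] \<and> set (\<sigma> a) \<subseteq> {1..N})"

definition subshift :: "nat \<Rightarrow> (nat \<Rightarrow> nat list) \<Rightarrow> (int \<Rightarrow> nat) set" where
  "subshift N \<sigma> = {x. \<forall>n::nat. n \<ge> 1 \<longrightarrow>
      (\<exists>m a. m \<ge> 1 \<and> a \<in> {1..N} \<and> sublist (map x [-int n..int n]) (subst_iter \<sigma> m a))}"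

definition shift :: "(int \<Rightarrow> nat) \<Rightarrow> (int \<Rightarrow> nat)" where
  "shift x = (\<lambda>i. x (i + 1))"

definition cyl :: "nat \<Rightarrow> (int \<Rightarrow> nat) set" where
  "cyl b = {x. x 0 = b}"

text \<open>Substitution matrix M_sigma, letter i (1..N) has matrix index i-1;
  entry (a,b) = number of occurrences of a in sigma(b).\<close>
definition subst_mat :: "nat \<Rightarrow> (nat \<Rightarrow> nat list) \<Rightarrow> real mat" where
  "subst_mat N \<sigma> = mat N N (\<lambda>(i,j). real (count_list (\<sigma> (j+1)) (i+1)))"

definition blockA :: "nat \<Rightarrow> (nat \<Rightarrow> nat list) \<Rightarrow> nat set \<Rightarrow> real mat" where
  "blockA N \<sigma> Bs = submatrix (subst_mat N \<sigma>) {i. i + 1 \<notin> Bs} {i. i + 1 \<notin> Bs}"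

definition blockB :: "nat \<Rightarrow> (nat \<Rightarrow> nat list) \<Rightarrow> nat set \<Rightarrow> real mat" where
  "blockB N \<sigma> Bs = submatrix (subst_mat N \<sigma>) {i. i + 1 \<in> Bs} {i. i + 1 \<in> Bs}"

definition blockC :: "nat \<Rightarrow> (nat \<Rightarrow> nat list) \<Rightarrow> nat set \<Rightarrow> real mat" where
  "blockC N \<sigma> Bs = submatrix (subst_mat N \<sigma>) {i. i + 1 \<notin> Bs} {i. i + 1 \<in> Bs}"

definition blockZero :: "nat \<Rightarrow> (nat \<Rightarrow> nat list) \<Rightarrow> nat set \<Rightarrow> real mat" where
  "blockZero N \<sigma> Bs = submatrix (subst_mat N \<sigma>) {i. i + 1 \<in> Bs} {i. i + 1 \<notin> Bs}"

definition primitive_mat :: "real mat \<Rightarrow> bool" where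
  "primitive_mat A \<longleftrightarrow> dim_row A = dim_col A \<and> dim_row A > 0 \<and>
     (\<forall>i<dim_row A. \<forall>j<dim_col A. A $$ (i,j) \<ge> 0) \<and>
     (\<exists>k>0. \<forall>i<dim_row A. \<forall>j<dim_col A. (A ^\<^sub>m k) $$ (i,j) > 0)"

definition rho :: "real mat \<Rightarrow> real" where
  "rho A = spectral_radius (map_mat complex_of_real A)"

definition admissible :: "nat \<Rightarrow> (nat \<Rightarrow> nat list) \<Rightarrow> nat set \<Rightarrow> bool" where
  "admissible N \<sigma> Bs \<longleftrightarrow>
     is_substitution N \<sigma> \<and> Bs \<subseteq> {1..N} \<and> Bs \<noteq> {} \<and> Bs \<noteq> {1..N} \<and>
     primitive_mat (blockA N \<sigma> Bs) \<and> primitive_mat (blockB N \<sigma> Bs) \<and>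
     blockZero N \<sigma> Bs = 0\<^sub>m (dim_row (blockZero N \<sigma> Bs)) (dim_col (blockZero N \<sigma> Bs)) \<and>
     blockC N \<sigma> Bs \<noteq> 0\<^sub>m (dim_row (blockC N \<sigma> Bs)) (dim_col (blockC N \<sigma> Bs)) \<and>
     rho (blockA N \<sigma> Bs) > rho (blockB N \<sigma> Bs) \<and> rho (blockB N \<sigma> Bs) > 1 \<and>
     (\<forall>b\<in>Bs. hd (\<sigma> b) \<in> Bs \<and> last (\<sigma> b) \<in> Bs) \<and>
     (\<forall>b\<in>Bs. \<exists>k i. 0 < i \<and> i + 1 < length (subst_iter \<sigma> k b) \<and> subst_iter \<sigma> k b ! i \<in> Bs)"

definition subshift_space :: "nat \<Rightarrow> (nat \<Rightarrow> nat list) \<Rightarrow> (int \<Rightarrow> nat) measure" where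
  "subshift_space N \<sigma> = restrict_space (Pi\<^sub>M UNIV (\<lambda>_. count_space {1..N})) (subshift N \<sigma>)"

end

theory Submission
  imports Defs "HOL-Real_Asymp.Real_Asymp"
begin

lemma mvt_powr:
  fixes k \<alpha> :: real
  assumes k: "k \<ge> 1" and \<alpha>: "\<alpha> > 0"
  shows "\<alpha> * (k+1) powr (-\<alpha>-1) \<le> k powr (-\<alpha>) - (k+1) powr (-\<alpha>)"
    and "k powr (-\<alpha>) - (k+1) powr (-\<alpha>) \<le> \<alpha> * k powr (-\<alpha>-1)"
proof -
  have D: "\<And>x. k \<le> x \<Longrightarrow> x \<le> k+1 \<Longrightarrow> ((\<lambda>t. t powr (-\<alpha>)) has_real_derivative (-\<alpha>) * x powr (-\<alpha>-1)) (at x)"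
  proof -
    fix x assume "k \<le> x" "x \<le> k+1"
    hence "x > 0" using k by auto
    show "((\<lambda>t. t powr (-\<alpha>)) has_real_derivative (-\<alpha>) * x powr (-\<alpha>-1)) (at x)"
      using \<open>x>0\<close> by (auto intro!: derivative_eq_intros simp: powr_diff field_simps)
  qed
  from MVT2[of k "k+1", OF _ D] obtain z where z: "z > k" "z < k+1"
    and eq: "(k+1) powr (-\<alpha>) - k powr (-\<alpha>) = (k+1-k) * ((-\<alpha>) * z powr (-\<alpha>-1))" by auto
  have e2: "k powr (-\<alpha>) - (k+1) powr (-\<alpha>) = \<alpha> * z powr (-\<alpha>-1)" using eq by simp
  have "(k+1) powr (-\<alpha>-1) \<le> z powr (-\<alpha>-1)" using z k \<alpha> by (intro powr_mono2') auto
  moreover have "z powr (-\<alpha>-1) \<le> k powr (-\<alpha>-1)" using z k \<alpha> by (intro powr_mono2') auto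
  ultimately show "\<alpha> * (k+1) powr (-\<alpha>-1) \<le> k powr (-\<alpha>) - (k+1) powr (-\<alpha>)"
    and "k powr (-\<alpha>) - (k+1) powr (-\<alpha>) \<le> \<alpha> * k powr (-\<alpha>-1)"
    using e2 \<alpha> by (auto intro: mult_left_mono)
qed

lemma l1: "(\<lambda>n::nat. ln (2 * real n) / ln (real n)) \<longlonglongrightarrow> 1" by real_asymp
lemma l2: "(\<lambda>n::nat. 1 / ln (real n)) \<longlonglongrightarrow> 0" by real_asymp

lemma powr_neg1: "real k powr (-\<alpha>-1) = 1 / real k powr (\<alpha>+1)"
proof -
  have "-\<alpha>-1 = -(\<alpha>+1)" by simp
  thus ?thesis by (simp only: powr_minus_divide)
qed

lemma abel_main:
  fixes a :: "nat \<Rightarrow> real" and \<alpha> c m :: real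
  assumes a01: "\<And>i. a i = 0 \<or> a i = 1" and \<alpha>: "\<alpha> > 0" and c: "c > 0"
    and lim: "(\<lambda>n. (1 / ln (real n)) * (\<Sum>k=1..n. (\<Sum>i<k. a i) / (c * real k powr (\<alpha> + 1)))) \<longlonglongrightarrow> m"
  shows "(\<lambda>n. (1 / ln (real n)) * (\<Sum>k=1..n. a k * real k powr (-\<alpha>))) \<longlonglongrightarrow> \<alpha> * (c * m)"
proof -
  define S where "S k = (\<Sum>i<k. a i)" for k
  define w where "w k = real k powr (-\<alpha>)" for k
  define v where "v k = real k powr (-\<alpha>-1)" for k
  define D where "D n = (\<Sum>k=1..n. S k * v k)" for n
  define T where "T n = (\<Sum>k=1..n. a k * w k)" for n
  define L where "L = c * m"
  have a0: "a i \<ge> 0" "a i \<le> 1" for i using a01[of i] by auto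
  have S_Suc: "S (Suc k) = S k + a k" for k by (simp add: S_def)
  have S_nn: "S k \<ge> 0" for k unfolding S_def using a0 by (simp add: sum_nonneg)
  have S_mono: "S k \<le> S l" if "k \<le> l" for k l
    unfolding S_def using a0 that by (intro sum_mono2) auto
  have v_nn: "v k \<ge> 0" for k by (simp add: v_def)
  have w_nn: "w k \<ge> 0" for k by (simp add: w_def)
  have w_le1: "w k \<le> 1" if "k \<ge> 1" for k
    unfolding w_def using that \<alpha> ge_one_powr_ge_zero[of "real k" \<alpha>] by (simp add: powr_minus_divide)
  have step: "\<alpha> * S (k+1) * v (k+1) \<le> S (k+1) * (w k - w (k+1))"
             "S (k+1) * (w k - w (k+1)) \<le> \<alpha> * (S k + 1) * v k" if "k \<ge> 1" for k
  proof -
    have m1: "\<alpha> * v (k+1) \<le> w k - w (k+1)" and m2: "w k - w (k+1) \<le> \<alpha> * v k"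
      using mvt_powr[of "real k" \<alpha>] that \<alpha> unfolding v_def w_def by (auto simp: add.commute)
    show "\<alpha> * S (k+1) * v (k+1) \<le> S (k+1) * (w k - w (k+1))"
      using mult_left_mono[OF m1 S_nn[of "k+1"]] by (simp add: mult_ac)
    have "S (k+1) * (w k - w (k+1)) \<le> S (k+1) * (\<alpha> * v k)"
      using mult_left_mono[OF m2 S_nn[of "k+1"]] .
    also have "\<dots> \<le> (S k + 1) * (\<alpha> * v k)"
      using S_Suc[of k] a0[of k] \<alpha> v_nn[of k] by (intro mult_right_mono) auto
    finally show "S (k+1) * (w k - w (k+1)) \<le> \<alpha> * (S k + 1) * v k" by (simp add: mult_ac)
  qed
  have lower: "T (Suc n) - S (Suc n + 1) * w (Suc n) + S 1 \<ge> \<alpha> * (D (Suc n) - S 1)" for n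
  proof (induction n)
    case 0 thus ?case by (simp add: T_def D_def S_def w_def v_def)
  next
    case (Suc n)
    have "T (Suc (Suc n)) - S (Suc (Suc n) + 1) * w (Suc (Suc n)) + S 1
        = (T (Suc n) - S (Suc n + 1) * w (Suc n) + S 1) + S (Suc n + 1) * (w (Suc n) - w (Suc n + 1))"
      by (simp add: T_def S_Suc algebra_simps)
    moreover have "D (Suc (Suc n)) = D (Suc n) + S (Suc n + 1) * v (Suc n + 1)"
      by (simp add: D_def)
    ultimately show ?case using Suc step(1)[of "Suc n"] by (simp add: algebra_simps)
  qed
  have upper: "T (Suc n) - S (Suc n + 1) * w (Suc n) + S 1 \<le> \<alpha> * (\<Sum>k\<in>{1..<Suc n}. (S k + 1) * v k)" for n
  proof (induction n)
    case 0 thus ?case by (simp add: T_def S_def w_def)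
  next
    case (Suc n)
    have "T (Suc (Suc n)) - S (Suc (Suc n) + 1) * w (Suc (Suc n)) + S 1
        = (T (Suc n) - S (Suc n + 1) * w (Suc n) + S 1) + S (Suc n + 1) * (w (Suc n) - w (Suc n + 1))"
      by (simp add: T_def S_Suc algebra_simps)
    moreover have "(\<Sum>k\<in>{1..<Suc (Suc n)}. (S k + 1) * v k) = (\<Sum>k\<in>{1..<Suc n}. (S k + 1) * v k) + (S (Suc n) + 1) * v (Suc n)"
      by simp
    ultimately show ?case using Suc step(2)[of "Suc n"] by (simp add: algebra_simps)
  qed
  have summ: "summable v" unfolding v_def using \<alpha> by (simp add: summable_real_powr_iff)
  define B where "B = suminf v"
  have VB: "(\<Sum>k=1..n. v k) \<le> B" for n
    unfolding B_def using summ v_nn by (intro sum_le_suminf) auto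
  have Sv: "(\<Sum>k\<in>{1..<n}. (S k + 1) * v k) \<le> D n + B" for n
  proof -
    have "(\<Sum>k\<in>{1..<n}. (S k + 1) * v k) \<le> (\<Sum>k\<in>{1..n}. (S k + 1) * v k)"
      using S_nn v_nn by (intro sum_mono2) auto
    also have "\<dots> = D n + (\<Sum>k=1..n. v k)" by (simp add: D_def algebra_simps sum.distrib)
    finally show ?thesis using VB[of n] by simp
  qed
  have bnd: "S n * w n \<le> 2 powr (\<alpha>+1) * (D (2*n) - D n)" if "n \<ge> 1" for n
  proof -
    have "D (2*n) = D n + (\<Sum>k\<in>{n<..2*n}. S k * v k)"
      unfolding D_def by (subst sum.union_disjoint[symmetric]) (auto intro!: sum.cong)
    moreover have "(\<Sum>k\<in>{n<..2*n}. S n * v (2*n)) \<le> (\<Sum>k\<in>{n<..2*n}. S k * v k)"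
    proof (intro sum_mono)
      fix k assume k: "k \<in> {n<..2*n}"
      have "v (2*n) \<le> v k" unfolding v_def using k \<alpha> by (intro powr_mono2') auto
      thus "S n * v (2*n) \<le> S k * v k" using k S_mono[of n k] S_nn v_nn
        by (intro mult_mono) auto
    qed
    moreover have "(\<Sum>k\<in>{n<..2*n}. S n * v (2*n)) = 2 powr (-\<alpha>-1) * (S n * w n)"
    proof -
      have e1: "(\<Sum>k\<in>{n<..2*n}. S n * v (2*n)) = real n * (S n * v (2*n))" by simp
      have e2: "v (2*n) = 2 powr (-\<alpha>-1) * real n powr (-\<alpha>-1)"
        unfolding v_def by (simp add: powr_mult)
      have e3: "real n * real n powr (-\<alpha>-1) = w n"
        unfolding w_def using that by (simp add: powr_diff powr_minus_divide field_simps)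
      have "real n * (S n * v (2*n)) = 2 powr (-\<alpha>-1) * S n * (real n * real n powr (-\<alpha>-1))"
        unfolding e2 by (simp add: mult_ac)
      thus ?thesis using e1 e3 by simp
    qed
    ultimately have "2 powr (-\<alpha>-1) * (S n * w n) \<le> D (2*n) - D n" by linarith
    hence "2 powr (\<alpha>+1) * (2 powr (-\<alpha>-1) * (S n * w n)) \<le> 2 powr (\<alpha>+1) * (D (2*n) - D n)"
      by (intro mult_left_mono) auto
    moreover have "2 powr (\<alpha>+1) * 2 powr (-\<alpha>-1) = (1::real)"
      by (simp add: powr_add[symmetric])
    ultimately show ?thesis by (simp add: mult.assoc[symmetric])
  qed
  have Dlim: "(\<lambda>n. D n / ln (real n)) \<longlonglongrightarrow> L"
  proof -
    have "(\<lambda>n. c * ((1 / ln (real n)) * (\<Sum>k=1..n. (\<Sum>i<k. a i) / (c * real k powr (\<alpha> + 1))))) \<longlonglongrightarrow> c * m"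
      by (rule tendsto_mult_left[OF lim])
    moreover have "c * ((1 / ln (real n)) * (\<Sum>k=1..n. (\<Sum>i<k. a i) / (c * real k powr (\<alpha> + 1)))) = D n / ln (real n)" for n
    proof -
      have "(\<Sum>k=1..n. (\<Sum>i<k. a i) / (c * real k powr (\<alpha> + 1))) = (\<Sum>k=1..n. S k * v k) / c"
      proof -
        have "(\<Sum>i<k. a i) / (c * real k powr (\<alpha> + 1)) = S k * v k / c" for k
          unfolding S_def v_def powr_neg1 by simp
        hence "(\<Sum>k=1..n. (\<Sum>i<k. a i) / (c * real k powr (\<alpha> + 1))) = (\<Sum>k=1..n. S k * v k / c)"
          by (intro sum.cong) auto
        also have "\<dots> = (\<Sum>k=1..n. S k * v k) / c" by (rule sum_divide_distrib[symmetric])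
        finally show ?thesis .
      qed
      hence "c * ((1 / ln (real n)) * (\<Sum>k=1..n. (\<Sum>i<k. a i) / (c * real k powr (\<alpha> + 1)))) = c * ((1 / ln (real n)) * (D n / c))"
        unfolding D_def by simp
      also have "\<dots> = D n / ln (real n)" using c by simp
      finally show ?thesis .
    qed
    ultimately show ?thesis unfolding L_def by (simp only:)
  qed
  have D2lim: "(\<lambda>n. D (2*n) / ln (real n)) \<longlonglongrightarrow> L"
  proof -
    have sm: "strict_mono (\<lambda>n::nat. 2*n)" by (simp add: strict_mono_def)
    have "(\<lambda>n. D (2*n) / ln (real (2*n))) \<longlonglongrightarrow> L"
      using LIMSEQ_subseq_LIMSEQ[OF Dlim sm] by (simp add: o_def)
    hence "(\<lambda>n. D (2*n) / ln (real (2*n)) * (ln (2 * real n) / ln (real n))) \<longlonglongrightarrow> L * 1"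
      by (intro tendsto_mult l1)
    moreover have "eventually (\<lambda>n. D (2*n) / ln (real (2*n)) * (ln (2 * real n) / ln (real n)) = D (2*n) / ln (real n)) sequentially"
      using eventually_gt_at_top[of "1::nat"] by eventually_elim (auto simp: field_simps)
    ultimately show ?thesis using Lim_transform_eventually by fastforce
  qed
  have lowlim: "(\<lambda>n. \<alpha> * (D n / ln (real n)) - (\<alpha>+1) * S 1 * (1 / ln (real n))) \<longlonglongrightarrow> \<alpha> * (c * m)"
  proof -
    have "(\<lambda>n. \<alpha> * (D n / ln (real n)) - (\<alpha>+1) * S 1 * (1 / ln (real n))) \<longlonglongrightarrow> \<alpha> * L - (\<alpha>+1) * S 1 * 0"
      by (intro tendsto_intros Dlim l2)
    thus ?thesis by (simp add: L_def)
  qed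
  have uplim: "(\<lambda>n. 2 powr (\<alpha>+1) * (D (2*n) / ln (real n) - D n / ln (real n)) + (1 + \<alpha> * B) * (1 / ln (real n)) + \<alpha> * (D n / ln (real n)))
      \<longlonglongrightarrow> \<alpha> * (c * m)"
  proof -
    have "(\<lambda>n. 2 powr (\<alpha>+1) * (D (2*n) / ln (real n) - D n / ln (real n)) + (1 + \<alpha> * B) * (1 / ln (real n)) + \<alpha> * (D n / ln (real n)))
      \<longlonglongrightarrow> 2 powr (\<alpha>+1) * (L - L) + (1 + \<alpha> * B) * 0 + \<alpha> * L"
      by (intro tendsto_intros Dlim D2lim l2)
    thus ?thesis by (simp add: L_def)
  qed
  show ?thesis
  proof (rule tendsto_sandwich[OF _ _ lowlim uplim])
    show "eventually (\<lambda>n. \<alpha> * (D n / ln (real n)) - (\<alpha>+1) * S 1 * (1 / ln (real n))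
           \<le> (1 / ln (real n)) * (\<Sum>k=1..n. a k * real k powr (-\<alpha>))) sequentially"
      using eventually_gt_at_top[of "1::nat"]
    proof eventually_elim
      case (elim n)
      then obtain p where p: "n = Suc p" by (cases n) auto
      have ln: "ln (real n) > 0" using elim by simp
      have l: "\<alpha>*(D n - S 1) \<le> T n - S (n+1) * w n + S 1" using lower[of p] p by simp
      have "0 \<le> S (n+1) * w n" using S_nn w_nn by simp
      moreover have "\<alpha>*(D n - S 1) = \<alpha>*D n - \<alpha>*S 1" by (simp add: right_diff_distrib)
      moreover have "(\<alpha>+1)*S 1 = \<alpha>*S 1 + S 1" by (simp add: distrib_right)
      ultimately have "\<alpha> * D n - (\<alpha>+1) * S 1 \<le> T n" using l by linarith
      hence "(\<alpha> * D n - (\<alpha>+1) * S 1) / ln (real n) \<le> T n / ln (real n)"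
        using ln by (intro divide_right_mono) auto
      moreover have "\<alpha> * (D n / ln (real n)) - (\<alpha>+1) * S 1 * (1 / ln (real n)) = (\<alpha> * D n - (\<alpha>+1) * S 1) / ln (real n)"
        by (simp add: diff_divide_distrib)
      moreover have "(1 / ln (real n)) * (\<Sum>k=1..n. a k * real k powr (-\<alpha>)) = T n / ln (real n)"
      proof -
        have tn: "(\<Sum>k=1..n. a k * real k powr (-\<alpha>)) = T n" unfolding T_def w_def by (rule refl)
        show ?thesis unfolding tn by simp
      qed
      ultimately show ?case by linarith
    qed
    show "eventually (\<lambda>n. (1 / ln (real n)) * (\<Sum>k=1..n. a k * real k powr (-\<alpha>)) \<le>
       2 powr (\<alpha>+1) * (D (2*n) / ln (real n) - D n / ln (real n)) + (1 + \<alpha> * B) * (1 / ln (real n)) + \<alpha> * (D n / ln (real n))) sequentially"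
      using eventually_gt_at_top[of "1::nat"]
    proof eventually_elim
      case (elim n)
      then obtain p where p: "n = Suc p" by (cases n) auto
      have ln: "ln (real n) > 0" using elim by simp
      have "a n * w n \<le> 1" using a0[of n] w_le1[of n] w_nn[of n] elim by (intro mult_le_one) auto
      hence "S (n+1) * w n \<le> S n * w n + 1"
        using S_Suc[of n] by (simp add: distrib_right)
      also have "\<dots> \<le> 2 powr (\<alpha>+1) * (D (2*n) - D n) + 1" using bnd[of n] elim by simp
      finally have b1: "S (n+1) * w n \<le> 2 powr (\<alpha>+1) * (D (2*n) - D n) + 1" .
      have u: "T n - S (n+1) * w n + S 1 \<le> \<alpha> * (\<Sum>k\<in>{1..<n}. (S k + 1) * v k)" using upper[of p] p by simp
      have "\<alpha> * (\<Sum>k\<in>{1..<n}. (S k + 1) * v k) \<le> \<alpha> * (D n + B)"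
        using Sv[of n] \<alpha> by (intro mult_left_mono) auto
      hence "T n \<le> S (n+1) * w n + \<alpha> * (D n + B)" using u S_nn[of 1] by linarith
      hence "T n \<le> 2 powr (\<alpha>+1) * (D (2*n) - D n) + (1 + \<alpha> * B) + \<alpha> * D n"
        using b1 by (simp add: algebra_simps)
      hence "T n / ln (real n) \<le> (2 powr (\<alpha>+1) * (D (2*n) - D n) + (1 + \<alpha> * B) + \<alpha> * D n) / ln (real n)"
        using ln by (intro divide_right_mono) auto
      moreover have "2 powr (\<alpha>+1) * (D (2*n) / ln (real n) - D n / ln (real n)) + (1 + \<alpha> * B) * (1 / ln (real n)) + \<alpha> * (D n / ln (real n))
         = (2 powr (\<alpha>+1) * (D (2*n) - D n) + (1 + \<alpha> * B) + \<alpha> * D n) / ln (real n)"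
        by (simp add: add_divide_distrib diff_divide_distrib right_diff_distrib)
      moreover have "(1 / ln (real n)) * (\<Sum>k=1..n. a k * real k powr (-\<alpha>)) = T n / ln (real n)"
      proof -
        have tn: "(\<Sum>k=1..n. a k * real k powr (-\<alpha>)) = T n" unfolding T_def w_def by (rule refl)
        show ?thesis unfolding tn by simp
      qed
      ultimately show ?case by linarith
    qed
  qed
qed


lemma shift_pow: "(shift ^^ i) x = (\<lambda>j. x (j + int i))"
  by (induction i) (auto simp: shift_def algebra_simps)

theorem mainTheorem12:
  fixes N :: nat and \<sigma> :: "nat \<Rightarrow> nat list" and Bs :: "nat set"
    and \<nu> :: "(int \<Rightarrow> nat) measure" and \<xi> :: "nat \<Rightarrow> real" and c :: real
  assumes adm: "admissible N \<sigma> Bs"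
    and \<xi>_pos: "\<forall>i\<in>{1..N}. \<xi> i > 0"
    and \<xi>_lim: "\<forall>i\<in>{1..N}. (\<lambda>k. real (length (subst_iter \<sigma> k i)) /
                   (\<xi> i * rho (blockA N \<sigma> Bs) ^ k)) \<longlonglongrightarrow> 1"
    and \<nu>_sets: "sets \<nu> = sets (subshift_space N \<sigma>)"
    and \<nu>_space: "space \<nu> = subshift N \<sigma>"
    and \<nu>_sfin: "sigma_finite_measure \<nu>"
    and \<nu>_inf: "emeasure \<nu> (space \<nu>) = \<infinity>"
    and \<nu>_meas: "shift \<in> \<nu> \<rightarrow>\<^sub>M \<nu>"
    and \<nu>_inv: "distr \<nu> \<nu> shift = \<nu>"
    and \<nu>_cyl: "\<forall>b\<in>Bs. 0 < emeasure \<nu> (cyl b \<inter> space \<nu>) \<and> emeasure \<nu> (cyl b \<inter> space \<nu>) < \<infinity>"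
    and \<nu>_norm: "(\<Sum>b\<in>Bs. \<xi> b * measure \<nu> (cyl b \<inter> space \<nu>)) = 1"
    and c_pos: "c > 0"
    and c_ergodic: "\<forall>f::(int \<Rightarrow> nat) \<Rightarrow> real. integrable \<nu> f \<longrightarrow>
          (AE x in \<nu>. (\<lambda>n. (1 / ln (real n)) *
              (\<Sum>k=1..n. (\<Sum>i<k. f ((shift ^^ i) x)) /
                 (c * real k powr (ln (rho (blockB N \<sigma> Bs)) / ln (rho (blockA N \<sigma> Bs)) + 1))))
             \<longlonglongrightarrow> integral\<^sup>L \<nu> f)"
  shows "\<forall>b\<in>Bs. AE x in \<nu>.
           (\<lambda>n. (1 / ln (real n)) *
              (\<Sum>k\<in>{k. 1 \<le> k \<and> k \<le> n \<and> x (int k) = b}.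
                 1 / real k powr (ln (rho (blockB N \<sigma> Bs)) / ln (rho (blockA N \<sigma> Bs)))))
           \<longlonglongrightarrow> (ln (rho (blockB N \<sigma> Bs)) / ln (rho (blockA N \<sigma> Bs))) * c * measure \<nu> (cyl b \<inter> space \<nu>)"
proof (intro ballI)
  fix b assume b: "b \<in> Bs"
  have rB: "rho (blockB N \<sigma> Bs) > 1" and rA: "rho (blockA N \<sigma> Bs) > rho (blockB N \<sigma> Bs)"
    using adm unfolding admissible_def by auto
  have \<alpha>_pos: "ln (rho (blockB N \<sigma> Bs)) / ln (rho (blockA N \<sigma> Bs)) > 0"
    using rA rB by (intro divide_pos_pos) auto
  have bN: "b \<in> {1..N}" using adm b unfolding admissible_def by auto
  have meas: "(\<lambda>x::int\<Rightarrow>nat. x 0) \<in> measurable \<nu> (count_space {1..N})"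
  proof -
    have "(\<lambda>x::int\<Rightarrow>nat. x 0) \<in> measurable (Pi\<^sub>M UNIV (\<lambda>_. count_space {1..N})) (count_space {1..N})"
      by (rule measurable_component_singleton) simp
    hence "(\<lambda>x::int\<Rightarrow>nat. x 0) \<in> measurable (subshift_space N \<sigma>) (count_space {1..N})"
      unfolding subshift_space_def by (rule measurable_restrict_space1)
    thus ?thesis using measurable_cong_sets[OF \<nu>_sets refl, of "count_space {1..N}"] by (simp only:)
  qed
  have cs: "cyl b \<inter> space \<nu> \<in> sets \<nu>"
  proof -
    have "(\<lambda>x::int\<Rightarrow>nat. x 0) -` {b} \<inter> space \<nu> \<in> sets \<nu>"
      using measurable_sets[OF meas, of "{b}"] bN by simp
    moreover have "(\<lambda>x::int\<Rightarrow>nat. x 0) -` {b} = cyl b" by (auto simp: cyl_def)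
    ultimately show ?thesis by simp
  qed
  have int1: "integrable \<nu> (indicator (cyl b \<inter> space \<nu>) :: (int \<Rightarrow> nat) \<Rightarrow> real)"
    using cs \<nu>_cyl b by (intro integrable_real_indicator) auto
  have int: "integrable \<nu> (indicator (cyl b) :: (int \<Rightarrow> nat) \<Rightarrow> real)"
  proof -
    have "integrable \<nu> (indicator (cyl b) :: (int \<Rightarrow> nat) \<Rightarrow> real) = integrable \<nu> (indicator (cyl b \<inter> space \<nu>) :: (int \<Rightarrow> nat) \<Rightarrow> real)"
      by (rule Bochner_Integration.integrable_cong) (auto simp: indicator_def)
    thus ?thesis using int1 by simp
  qed
  have intv: "integral\<^sup>L \<nu> (indicator (cyl b) :: (int \<Rightarrow> nat) \<Rightarrow> real) = measure \<nu> (cyl b \<inter> space \<nu>)"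
    by simp
  have AE: "AE x in \<nu>. (\<lambda>n. (1 / ln (real n)) *
              (\<Sum>k=1..n. (\<Sum>i<k. (indicator (cyl b) :: (int \<Rightarrow> nat) \<Rightarrow> real) ((shift ^^ i) x)) /
                 (c * real k powr (ln (rho (blockB N \<sigma> Bs)) / ln (rho (blockA N \<sigma> Bs)) + 1))))
             \<longlonglongrightarrow> measure \<nu> (cyl b \<inter> space \<nu>)"
    using c_ergodic[rule_format, OF int] unfolding intv .
  show "AE x in \<nu>.
           (\<lambda>n. (1 / ln (real n)) *
              (\<Sum>k\<in>{k. 1 \<le> k \<and> k \<le> n \<and> x (int k) = b}.
                 1 / real k powr (ln (rho (blockB N \<sigma> Bs)) / ln (rho (blockA N \<sigma> Bs)))))
           \<longlonglongrightarrow> (ln (rho (blockB N \<sigma> Bs)) / ln (rho (blockA N \<sigma> Bs))) * c * measure \<nu> (cyl b \<inter> space \<nu>)"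
    using AE
  proof (rule eventually_mono)
    fix x
    assume H: "(\<lambda>n. (1 / ln (real n)) *
              (\<Sum>k=1..n. (\<Sum>i<k. (indicator (cyl b) :: (int \<Rightarrow> nat) \<Rightarrow> real) ((shift ^^ i) x)) /
                 (c * real k powr (ln (rho (blockB N \<sigma> Bs)) / ln (rho (blockA N \<sigma> Bs)) + 1))))
             \<longlonglongrightarrow> measure \<nu> (cyl b \<inter> space \<nu>)"
    define a where "a i = (if x (int i) = b then 1 else 0 :: real)" for i
    have fa: "(indicator (cyl b) :: (int \<Rightarrow> nat) \<Rightarrow> real) ((shift ^^ i) x) = a i" for i
      by (simp add: a_def shift_pow cyl_def indicator_def)
    have H': "(\<lambda>n. (1 / ln (real n)) *
              (\<Sum>k=1..n. (\<Sum>i<k. a i) /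
                 (c * real k powr (ln (rho (blockB N \<sigma> Bs)) / ln (rho (blockA N \<sigma> Bs)) + 1))))
             \<longlonglongrightarrow> measure \<nu> (cyl b \<inter> space \<nu>)"
      using H unfolding fa .
    have R: "(\<lambda>n. (1 / ln (real n)) * (\<Sum>k=1..n. a k * real k powr (-(ln (rho (blockB N \<sigma> Bs)) / ln (rho (blockA N \<sigma> Bs))))))
       \<longlonglongrightarrow> (ln (rho (blockB N \<sigma> Bs)) / ln (rho (blockA N \<sigma> Bs))) * (c * measure \<nu> (cyl b \<inter> space \<nu>))"
      by (rule abel_main[OF _ \<alpha>_pos c_pos H']) (simp add: a_def)
    have eq: "(\<Sum>k\<in>{k. 1 \<le> k \<and> k \<le> n \<and> x (int k) = b}.
                 1 / real k powr (ln (rho (blockB N \<sigma> Bs)) / ln (rho (blockA N \<sigma> Bs))))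
         = (\<Sum>k=1..n. a k * real k powr (-(ln (rho (blockB N \<sigma> Bs)) / ln (rho (blockA N \<sigma> Bs)))))" for n
    proof -
      have "{k. 1 \<le> k \<and> k \<le> n \<and> x (int k) = b} = {k\<in>{1..n}. x (int k) = b}" by auto
      have "(\<Sum>k\<in>{k. 1 \<le> k \<and> k \<le> n \<and> x (int k) = b}.
                 1 / real k powr (ln (rho (blockB N \<sigma> Bs)) / ln (rho (blockA N \<sigma> Bs))))
          = (\<Sum>k=1..n. if x (int k) = b then 1 / real k powr (ln (rho (blockB N \<sigma> Bs)) / ln (rho (blockA N \<sigma> Bs))) else 0)"
        unfolding \<open>{k. 1 \<le> k \<and> k \<le> n \<and> x (int k) = b} = {k\<in>{1..n}. x (int k) = b}\<close>
        by (rule sum.inter_filter) simp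
      also have "\<dots> = (\<Sum>k=1..n. a k * real k powr (-(ln (rho (blockB N \<sigma> Bs)) / ln (rho (blockA N \<sigma> Bs)))))"
        by (intro sum.cong) (simp_all add: a_def powr_minus_divide[symmetric])
      finally show ?thesis .
    qed
    show "(\<lambda>n. (1 / ln (real n)) *
              (\<Sum>k\<in>{k. 1 \<le> k \<and> k \<le> n \<and> x (int k) = b}.
                 1 / real k powr (ln (rho (blockB N \<sigma> Bs)) / ln (rho (blockA N \<sigma> Bs)))))
           \<longlonglongrightarrow> (ln (rho (blockB N \<sigma> Bs)) / ln (rho (blockA N \<sigma> Bs))) * c * measure \<nu> (cyl b \<inter> space \<nu>)"
      unfolding eq using R by (simp add: mult.assoc)
  qed
qed

end
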